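(* Let $x,y\in V(T)$ with $y\neq x$, let $\ddot s(x)$ be a worst-case scenario of $T$ with respect to $x$, and suppose $y$ is a prime broadcast center of $T$ under $\ddot s(x)$. Let $s$ be the scenario with $w^s_{a,b}=w^{\alpha_{x,y}}_{a,b}$ if $(a,b)\in P_{x,y}\cup E(T_{y,x})$ and $w^s_{a,b}=w^{\ddot s(x)}_{a,b}$ otherwise. Then $s$ is a worst-case scenario of $T$ with respect to $x$, and $y\in B^s$.
   Context: $T$ is a finite tree; each edge $(u,v)$ carries an interval $[w^-_{u,v},w^+_{u,v}]$ of non-negative reals. A scenario $s$ assigns to every edge a weight $w^s_{u,v}\in[w^-_{u,v},w^+_{u,v}]$; $C$ is the set of all scenarios. A constant $\rho>0$ is fixed. Broadcast time (postal model): for a subtree $G$ of $T$ and $u\in V(G)$, $b^s(u,G)=0$ if $u$ has no neighbour in $G$; otherwise, if $v_1,\dots,v_h$ are the neighbours of $u$ in $G$ and $G_{v}$ is the component of $G-u$ containing $v$, $b^s(u,G)=\min_{\pi}\max_{1\le k\le h}\big(k\rho+w^s_{u,v_{\pi(k)}}+b^s(v_{\pi(k)},G_{v_{\pi(k)}})\big)$ over permutations $\pi$. $B^s=\{u: b^s(u,T)\le b^s(v,T)\ \forall v\}$. For distinct $x,y$, $T_{x,y}$ is the component of $T-x$ containing $y$ and $\bar T_{x,y}$ the subtree induced by $V(T)\setminus V(T_{x,y})$. $P_{x,y}$ is the set of edges of the $x$–$y$ path. A vertex $\hat\kappa\in B^s$ is a prime broadcast center under $s$ if $b^s(\hat\kappa,\bar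 T_{\hat\kappa,u})\ge b^s(u,\bar T_{u,\hat\kappa})$ for every neighbour $u$ of $\hat\kappa$. Regret $r^s_{x,y}=b^s(x,T)-b^s(y,T)$; $\mathrm{max\_r}(x)=\max\{r^s_{x,y}:y\in V(T),s\in C\}$; $s'$ is a worst-case scenario w.r.t. $x$ if $\mathrm{max\_r}(x)=r^{s'}_{x,y'}$ for some $y'$. Base scenario: for $v\neq x$, $\alpha_{x,v}$ has $w^{\alpha_{x,v}}_{a,b}=w^+_{a,b}$ if $(a,b)\in P_{x,v}\cup E(\bar T_{v,x})$ and $w^-_{a,b}$ otherwise. *)

theory Defs
  imports Complex_Main
begin

definition adj :: "'v set set \<Rightarrow> 'v set \<Rightarrow> ('v \<times> 'v) set" where
  "adj E W = {(a,b). a \<in> W \<and> b \<in> W \<and> {a,b} \<in> E}"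

definition is_tree :: "'v set \<Rightarrow> 'v set set \<Rightarrow> bool" where
  "is_tree V E \<longleftrightarrow> finite V \<and> V \<noteq> {} \<and>
     (\<forall>e\<in>E. \<exists>a b. e = {a,b} \<and> a \<noteq> b \<and> a \<in> V \<and> b \<in> V) \<and>
     (\<forall>a\<in>V. \<forall>b\<in>V. (a,b) \<in> (adj E V)\<^sup>*) \<and>
     card E + 1 = card V"

definition nbrs :: "'v set set \<Rightarrow> 'v set \<Rightarrow> 'v \<Rightarrow> 'v set" where
  "nbrs E W u = {v \<in> W. {u,v} \<in> E}"

definition comp :: "'v set set \<Rightarrow> 'v set \<Rightarrow> 'v \<Rightarrow> 'v \<Rightarrow> 'v set" where
  "comp E W u v = {z. (v,z) \<in> (adj E (W - {u}))\<^sup>*}"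

text \<open>Broadcast time with a fuel argument; with fuel at least the number of vertices
  of the subtree, the recursion is never cut off.  Permutations of the h neighbours are
  represented as distinct lists enumerating the neighbour set; position k (0-based)
  is informed at time (k+1)*rho.\<close>
fun bt :: "real \<Rightarrow> 'v set set \<Rightarrow> ('v set \<Rightarrow> real) \<Rightarrow> nat \<Rightarrow> 'v set \<Rightarrow> 'v \<Rightarrow> real" where
  "bt \<rho> E s 0 W u = 0"
| "bt \<rho> E s (Suc n) W u =
     (if nbrs E W u = {} then 0
      else Min ((\<lambda>vs. Max ((\<lambda>k. real (Suc k) * \<rho> + s {u, vs ! k}
                    + bt \<rho> E s n (comp E W u (vs ! k)) (vs ! k)) ` {..<length vs}))
              ` {vs. distinct vs \<and> set vs = nbrs E W u}))"

definition btime :: "real \<Rightarrow> 'v set set \<Rightarrow> ('v set \<Rightarrow> real) \<Rightarrow> 'v set \<Rightarrow> 'v \<Rightarrow> real" where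
  "btime \<rho> E s W u = bt \<rho> E s (card W) W u"

text \<open>T_{x,y}: vertex set of the component of T - x containing y; bar T_{x,y}: the rest\<close>
definition Tsub :: "'v set set \<Rightarrow> 'v set \<Rightarrow> 'v \<Rightarrow> 'v \<Rightarrow> 'v set" where
  "Tsub E V x y = comp E V x y"

definition Tbar :: "'v set set \<Rightarrow> 'v set \<Rightarrow> 'v \<Rightarrow> 'v \<Rightarrow> 'v set" where
  "Tbar E V x y = V - Tsub E V x y"

definition edges_of :: "'v set set \<Rightarrow> 'v set \<Rightarrow> 'v set set" where
  "edges_of E W = {e \<in> E. e \<subseteq> W}"

definition is_path :: "'v set set \<Rightarrow> 'v list \<Rightarrow> bool" where
  "is_path E xs \<longleftrightarrow> xs \<noteq> [] \<and> distinct xs \<and>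
     (\<forall>i < length xs - 1. {xs ! i, xs ! Suc i} \<in> E)"

definition path_edges :: "'v set set \<Rightarrow> 'v \<Rightarrow> 'v \<Rightarrow> 'v set set" where
  "path_edges E x y = {e. \<exists>xs. is_path E xs \<and> hd xs = x \<and> last xs = y \<and>
                            (\<exists>i < length xs - 1. e = {xs ! i, xs ! Suc i})}"

definition scenarios :: "'v set set \<Rightarrow> ('v set \<Rightarrow> real) \<Rightarrow> ('v set \<Rightarrow> real) \<Rightarrow> ('v set \<Rightarrow> real) set" where
  "scenarios E wl wu = {s. \<forall>e\<in>E. wl e \<le> s e \<and> s e \<le> wu e}"

definition regret :: "real \<Rightarrow> 'v set \<Rightarrow> 'v set set \<Rightarrow> ('v set \<Rightarrow> real) \<Rightarrow> 'v \<Rightarrow> 'v \<Rightarrow> real" where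
  "regret \<rho> V E s x y = btime \<rho> E s V x - btime \<rho> E s V y"

definition worst_case :: "real \<Rightarrow> 'v set \<Rightarrow> 'v set set \<Rightarrow> ('v set \<Rightarrow> real) \<Rightarrow> ('v set \<Rightarrow> real)
                          \<Rightarrow> 'v \<Rightarrow> ('v set \<Rightarrow> real) \<Rightarrow> bool" where
  "worst_case \<rho> V E wl wu x s' \<longleftrightarrow> s' \<in> scenarios E wl wu \<and>
     (\<exists>y'\<in>V. \<forall>y\<in>V. \<forall>s\<in>scenarios E wl wu. regret \<rho> V E s x y \<le> regret \<rho> V E s' x y')"

definition bcenters :: "real \<Rightarrow> 'v set \<Rightarrow> 'v set set \<Rightarrow> ('v set \<Rightarrow> real) \<Rightarrow> 'v set" where
  "bcenters \<rho> V E s = {u \<in> V. \<forall>v\<in>V. btime \<rho> E s V u \<le> btime \<rho> E s V v}"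

definition prime_center :: "real \<Rightarrow> 'v set \<Rightarrow> 'v set set \<Rightarrow> ('v set \<Rightarrow> real) \<Rightarrow> 'v \<Rightarrow> bool" where
  "prime_center \<rho> V E s k \<longleftrightarrow> k \<in> bcenters \<rho> V E s \<and>
     (\<forall>u \<in> nbrs E V k. btime \<rho> E s (Tbar E V k u) k \<ge> btime \<rho> E s (Tbar E V u k) u)"

definition alpha :: "'v set \<Rightarrow> 'v set set \<Rightarrow> ('v set \<Rightarrow> real) \<Rightarrow> ('v set \<Rightarrow> real) \<Rightarrow> 'v \<Rightarrow> 'v \<Rightarrow> ('v set \<Rightarrow> real)" where
  "alpha V E wl wu x v = (\<lambda>e. if e \<in> path_edges E x v \<union> edges_of E (Tbar E V v x) then wu e else wl e)"

end

theory Submission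
  imports Defs
begin


lemma adj_sym: "(a,b) \<in> adj E W \<Longrightarrow> (b,a) \<in> adj E W"
  unfolding adj_def by (auto simp: insert_commute)

lemma rt_sym: "(a,b) \<in> (adj E W)\<^sup>* \<Longrightarrow> (b,a) \<in> (adj E W)\<^sup>*"
proof (induction rule: rtrancl_induct)
  case base then show ?case by simp
next
  case (step y z)
  then show ?case using adj_sym by (meson converse_rtrancl_into_rtrancl)
qed

lemma adj_mono: "W \<subseteq> W' \<Longrightarrow> E \<subseteq> E' \<Longrightarrow> adj E W \<subseteq> adj E' W'"
  unfolding adj_def by auto

lemma rt_mono: "W \<subseteq> W' \<Longrightarrow> E \<subseteq> E' \<Longrightarrow> (a,b) \<in> (adj E W)\<^sup>* \<Longrightarrow> (a,b) \<in> (adj E' W')\<^sup>*"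
  using rtrancl_mono[OF adj_mono] by blast

definition cls :: "'v set set \<Rightarrow> 'v set \<Rightarrow> 'v \<Rightarrow> 'v set" where
  "cls E V z = {w\<in>V. (z,w) \<in> (adj E V)\<^sup>*}"

lemma adj_insert: "a \<in> V \<Longrightarrow> b \<in> V \<Longrightarrow> adj (insert {a,b} F) V \<subseteq> adj F V \<union> {(a,b),(b,a)}"
  unfolding adj_def by (auto simp: doubleton_eq_iff)

lemma char_insert:
  assumes "a \<in> V" "b \<in> V" "(z,w) \<in> (adj (insert {a,b} F) V)\<^sup>*"
  shows "(z,w) \<in> (adj F V)\<^sup>* \<or> ((z,a) \<in> (adj F V)\<^sup>* \<and> (b,w) \<in> (adj F V)\<^sup>*)
           \<or> ((z,b) \<in> (adj F V)\<^sup>* \<and> (a,w) \<in> (adj F V)\<^sup>*)"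
  using assms(3)
proof (induction rule: rtrancl_induct)
  case base then show ?case by simp
next
  case (step y u)
  have st: "(y,u) \<in> adj F V \<or> (y,u) = (a,b) \<or> (y,u) = (b,a)"
    using step(2) adj_insert[OF assms(1,2), of F] by blast
  let ?R = "(adj F V)\<^sup>*"
  from st show ?case
  proof (elim disjE)
    assume yu: "(y,u) \<in> adj F V"
    then show ?thesis using step(3) by (meson rtrancl.rtrancl_into_rtrancl)
  next
    assume yu: "(y,u) = (a,b)"
    then show ?thesis using step(3) by auto
  next
    assume yu: "(y,u) = (b,a)"
    then show ?thesis using step(3) by auto
  qed
qed

lemma cls_eq: "(z,w) \<in> (adj E V)\<^sup>* \<Longrightarrow> cls E V z = cls E V w"
  unfolding cls_def by (auto intro: rtrancl_trans rt_sym)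

lemma count:
  assumes "finite V" "finite E" "\<forall>e\<in>E. \<exists>a b. e = {a,b} \<and> a \<in> V \<and> b \<in> V"
  shows "card V \<le> card E + card (cls E V ` V)"
  using assms(2,3)
proof (induction E rule: finite_induct)
  case empty
  have "adj {} V = {}" unfolding adj_def by simp
  then have "cls {} V z = {z}" if "z \<in> V" for z using that unfolding cls_def by auto
  then have "cls {} V ` V = (\<lambda>z. {z}) ` V" by auto
  moreover have "card ((\<lambda>z. {z}) ` V) = card V" by (rule card_image) (auto simp: inj_on_def)
  ultimately show ?case by simp
next
  case (insert e F)
  obtain a b where e: "e = {a,b}" "a \<in> V" "b \<in> V" using insert.prems by auto
  have IH: "card V \<le> card F + card (cls F V ` V)" using insert by auto
  let ?A = "V - cls F V b"
  have fin: "finite (cls F V ` V)" "finite (cls (insert e F) V ` V)" using assms(1) by auto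
  have "cls F V ` V \<subseteq> insert (cls F V b) (cls F V ` ?A)"
  proof
    fix C assume "C \<in> cls F V ` V"
    then obtain z where z: "z \<in> V" "C = cls F V z" by auto
    show "C \<in> insert (cls F V b) (cls F V ` ?A)"
    proof (cases "z \<in> cls F V b")
      case True
      then have "(b,z) \<in> (adj F V)\<^sup>*" unfolding cls_def by auto
      then have "cls F V b = cls F V z" by (rule cls_eq)
      then show ?thesis using z by simp
    next
      case False then show ?thesis using z by auto
    qed
  qed
  then have "card (cls F V ` V) \<le> card (insert (cls F V b) (cls F V ` ?A))"
    by (intro card_mono) (use assms(1) in auto)
  also have "\<dots> \<le> Suc (card (cls F V ` ?A))" by (simp add: card_insert_if assms(1))
  finally have c1: "card (cls F V ` V) \<le> card (cls F V ` ?A) + 1" by simp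
  define h where "h C = cls F V (SOME z. z \<in> ?A \<and> cls (insert e F) V z = C)" for C
  have key: "cls F V z = h (cls (insert e F) V z)" if z: "z \<in> ?A" for z
  proof -
    define z2 where "z2 = (SOME z2. z2 \<in> ?A \<and> cls (insert e F) V z2 = cls (insert e F) V z)"
    have "z2 \<in> ?A \<and> cls (insert e F) V z2 = cls (insert e F) V z"
      unfolding z2_def by (rule someI[of _ z]) (use z in simp)
    then have z2: "z2 \<in> ?A" "cls (insert e F) V z2 = cls (insert e F) V z" by auto
    have "z2 \<in> cls (insert e F) V z2" using z2(1) unfolding cls_def by auto
    then have "(z, z2) \<in> (adj (insert {a,b} F) V)\<^sup>*" using z2(2) e(1) unfolding cls_def by auto
    from char_insert[OF e(2,3) this]
    have "(z,z2) \<in> (adj F V)\<^sup>*"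
    proof (elim disjE)
      assume "(z, a) \<in> (adj F V)\<^sup>* \<and> (b, z2) \<in> (adj F V)\<^sup>*"
      then show ?thesis using z2(1) unfolding cls_def by auto
    next
      assume "(z, b) \<in> (adj F V)\<^sup>* \<and> (a, z2) \<in> (adj F V)\<^sup>*"
      then show ?thesis using z unfolding cls_def by (auto dest: rt_sym)
    qed
    then have "cls F V z = cls F V z2" by (rule cls_eq)
    then show ?thesis unfolding h_def z2_def by simp
  qed
  have "cls F V ` ?A = h ` (cls (insert e F) V ` ?A)" using key by (auto simp: image_image)
  then have "card (cls F V ` ?A) \<le> card (cls (insert e F) V ` ?A)"
    using card_image_le assms(1) by (metis finite_Diff finite_imageI)
  also have "\<dots> \<le> card (cls (insert e F) V ` V)" by (rule card_mono) (use fin in auto)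
  finally show ?case using IH c1 insert(1,2) by simp
qed

lemma tree_edge: "is_tree V E \<Longrightarrow> e \<in> E \<Longrightarrow> \<exists>a b. e = {a,b} \<and> a \<noteq> b \<and> a \<in> V \<and> b \<in> V"
  unfolding is_tree_def by blast

lemma tree_finE: "is_tree V E \<Longrightarrow> finite E"
proof -
  assume t: "is_tree V E"
  then have "E \<subseteq> Pow V" using tree_edge by blast
  moreover have "finite V" using t unfolding is_tree_def by simp
  ultimately show ?thesis by (meson finite_Pow_iff finite_subset)
qed

lemma bridge0:
  assumes t: "is_tree V E" and e: "{a,b} \<in> E"
  shows "(a,b) \<notin> (adj (E - {{a,b}}) V)\<^sup>*"
proof
  assume ab: "(a,b) \<in> (adj (E - {{a,b}}) V)\<^sup>*"
  let ?F = "E - {{a,b}}"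
  have fV: "finite V" "V \<noteq> {}" and conn: "\<forall>a\<in>V. \<forall>b\<in>V. (a,b) \<in> (adj E V)\<^sup>*"
    and cE: "card E + 1 = card V" using t unfolding is_tree_def by auto
  have fE: "finite E" by (rule tree_finE[OF t])
  obtain a' b' where ab': "{a,b} = {a',b'}" "a' \<in> V" "b' \<in> V" using tree_edge[OF t e] by blast
  have aV: "a \<in> V" "b \<in> V" using ab' by (auto simp: doubleton_eq_iff)
  have Fe: "\<forall>e\<in>?F. \<exists>a b. e = {a,b} \<and> a \<in> V \<and> b \<in> V" using t unfolding is_tree_def by blast
  have "card E > 0" using fE e card_gt_0_iff by blast
  then have cF: "card ?F + 1 = card E" using fE e by (simp add: card_Diff_singleton)
  have "card V \<le> card ?F + card (cls ?F V ` V)" by (rule count[OF fV(1) _ Fe]) (use fE in simp)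
  then have c2: "card (cls ?F V ` V) \<ge> 2" using cE cF by simp
  have "cls ?F V ` V \<subseteq> {cls ?F V a}"
  proof
    fix C assume "C \<in> cls ?F V ` V"
    then obtain z where z: "z \<in> V" "C = cls ?F V z" by auto
    have "(a,z) \<in> (adj (insert {a,b} ?F) V)\<^sup>*" using conn z(1) aV e by (simp add: insert_absorb)
    from char_insert[OF aV this] have "(a,z) \<in> (adj ?F V)\<^sup>*"
      using ab by (auto intro: rtrancl_trans)
    then have "cls ?F V a = cls ?F V z" by (rule cls_eq)
    then show "C \<in> {cls ?F V a}" using z by simp
  qed
  then have "card (cls ?F V ` V) \<le> card {cls ?F V a}" by (intro card_mono) auto
  then have "card (cls ?F V ` V) \<le> 1" by simp
  then show False using c2 by simp
qed



definition val :: "real \<Rightarrow> ('v \<Rightarrow> real) \<Rightarrow> 'v list \<Rightarrow> real" where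
  "val \<rho> g vs = Max ((\<lambda>k. real (Suc k) * \<rho> + g (vs ! k)) ` {..<length vs})"

definition sv :: "real \<Rightarrow> ('v \<Rightarrow> real) \<Rightarrow> 'v set \<Rightarrow> real" where
  "sv \<rho> g N = (if N = {} then 0 else Min (val \<rho> g ` {vs. distinct vs \<and> set vs = N}))"

lemma enum_finite: "finite N \<Longrightarrow> finite {vs. distinct vs \<and> set vs = N}"
proof -
  assume f: "finite N"
  have "{vs. distinct vs \<and> set vs = N} \<subseteq> {vs. set vs \<subseteq> N \<and> length vs \<le> card N}"
    using distinct_card by fastforce
  then show ?thesis using finite_lists_length_le[OF f] finite_subset by blast
qed

lemma enum_ne: "finite N \<Longrightarrow> {vs. distinct vs \<and> set vs = N} \<noteq> {}"
  using finite_distinct_list by auto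

lemma val_ge: "k < length vs \<Longrightarrow> real (Suc k) * \<rho> + g (vs ! k) \<le> val \<rho> g vs"
  unfolding val_def by (rule Max_ge) auto

lemma val_le: "vs \<noteq> [] \<Longrightarrow> (\<And>k. k < length vs \<Longrightarrow> real (Suc k) * \<rho> + g (vs ! k) \<le> c) \<Longrightarrow> val \<rho> g vs \<le> c"
  unfolding val_def by (subst Max_le_iff) auto

lemma sv_ne: "finite N \<Longrightarrow> N \<noteq> {} \<Longrightarrow> sv \<rho> g N = Min (val \<rho> g ` {vs. distinct vs \<and> set vs = N})"
  unfolding sv_def by simp

lemma sv_attained: assumes "finite N" "N \<noteq> {}"
  shows "\<exists>vs. distinct vs \<and> set vs = N \<and> sv \<rho> g N = val \<rho> g vs"
proof -
  have "sv \<rho> g N \<in> val \<rho> g ` {vs. distinct vs \<and> set vs = N}"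
    unfolding sv_ne[OF assms] by (rule Min_in) (use enum_finite[OF assms(1)] enum_ne[OF assms(1)] in auto)
  then show ?thesis by auto
qed

lemma F2: assumes "finite N" "distinct vs" "set vs = N" "N \<noteq> {}"
  shows "sv \<rho> g N \<le> val \<rho> g vs"
proof -
  show ?thesis unfolding sv_ne[OF assms(1) assms(4)]
    by (rule Min_le) (use enum_finite[OF assms(1)] assms in auto)
qed

lemma F1: assumes "finite N" "v \<in> N" "\<rho> \<ge> 0"
  shows "\<rho> + g v \<le> sv \<rho> g N"
proof -
  have ne: "N \<noteq> {}" using assms by auto
  obtain vs where vs: "distinct vs" "set vs = N" "sv \<rho> g N = val \<rho> g vs"
    using sv_attained[OF assms(1) ne] by blast
  obtain k where k: "k < length vs" "vs ! k = v" using vs(2) assms(2) by (metis in_set_conv_nth)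
  have "\<rho> \<le> real (Suc k) * \<rho>" using assms(3) by (simp add: algebra_simps)
  then have "\<rho> + g v \<le> real (Suc k) * \<rho> + g (vs ! k)" using k by simp
  also have "\<dots> \<le> val \<rho> g vs" by (rule val_ge[OF k(1)])
  finally show ?thesis using vs by simp
qed

lemma sv_nonneg: assumes "finite N" "\<rho> \<ge> 0" "\<forall>v\<in>N. g v \<ge> 0" shows "sv \<rho> g N \<ge> 0"
proof (cases "N = {}")
  case True then show ?thesis by (simp add: sv_def)
next
  case False then obtain v where "v \<in> N" by auto
  then show ?thesis using F1[OF assms(1) \<open>v\<in>N\<close> assms(2), of g] assms by force
qed

lemma F3: assumes "finite N" "v0 \<in> N" "\<rho> \<ge> 0"
  shows "sv \<rho> g N \<le> max (\<rho> + g v0) (\<rho> + sv \<rho> g (N - {v0}))"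
proof (cases "N - {v0} = {}")
  case True
  then have N: "N = {v0}" using assms by auto
  have "sv \<rho> g N \<le> val \<rho> g [v0]" by (rule F2) (use assms N in auto)
  also have "\<dots> = \<rho> + g v0" unfolding val_def by (simp add: lessThan_Suc)
  finally show ?thesis by simp
next
  case False
  obtain vs where vs: "distinct vs" "set vs = N - {v0}" "sv \<rho> g (N - {v0}) = val \<rho> g vs"
    using sv_attained[OF _ False] assms by blast
  have "sv \<rho> g N \<le> val \<rho> g (v0 # vs)" by (rule F2) (use assms vs in auto)
  also have "\<dots> \<le> max (\<rho> + g v0) (\<rho> + val \<rho> g vs)"
  proof (rule val_le)
    fix k assume k: "k < length (v0 # vs)"
    show "real (Suc k) * \<rho> + g ((v0 # vs) ! k) \<le> max (\<rho> + g v0) (\<rho> + val \<rho> g vs)"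
    proof (cases k)
      case 0 then show ?thesis by simp
    next
      case (Suc j)
      then have j: "j < length vs" using k by simp
      have "real (Suc k) * \<rho> + g ((v0 # vs) ! k) = \<rho> + (real (Suc j) * \<rho> + g (vs ! j))"
        using Suc by (simp add: algebra_simps)
      also have "\<dots> \<le> \<rho> + val \<rho> g vs" using val_ge[OF j] by simp
      finally show ?thesis by simp
    qed
  qed simp
  finally show ?thesis using vs by simp
qed

lemma F4a: assumes "finite N" "v0 \<in> N" "\<rho> \<ge> 0" "\<forall>v\<in>N. g v \<ge> 0"
  shows "sv \<rho> g (N - {v0}) \<le> sv \<rho> g N"
proof (cases "N - {v0} = {}")
  case True
  then show ?thesis using sv_nonneg[OF assms(1,3,4)] by (simp add: sv_def)
next
  case False
  have ne: "N \<noteq> {}" using assms by auto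
  obtain vs where vs: "distinct vs" "set vs = N" "sv \<rho> g N = val \<rho> g vs"
    using sv_attained[OF assms(1) ne] by blast
  obtain i where i: "i < length vs" "vs ! i = v0" using vs(2) assms(2) by (metis in_set_conv_nth)
  define ws where "ws = take i vs @ drop (Suc i) vs"
  have ws_nth: "ws ! k = (if k < i then vs ! k else vs ! Suc k)" if "k < length ws" for k
    using that i unfolding ws_def by (simp add: nth_append min_def)
  have lws: "length ws = length vs - 1" using i unfolding ws_def by simp
  have dws: "distinct ws" "set ws = N - {v0}"
  proof -
    have e: "vs = take i vs @ v0 # drop (Suc i) vs" using i by (metis id_take_nth_drop)
    have "distinct (take i vs @ v0 # drop (Suc i) vs)" using vs(1) by (subst (asm) e)
    moreover have "set (take i vs @ v0 # drop (Suc i) vs) = N" using vs(2) by (subst (asm) e)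
    ultimately show "distinct ws" "set ws = N - {v0}" unfolding ws_def by auto
  qed
  have "sv \<rho> g (N - {v0}) \<le> val \<rho> g ws" by (rule F2) (use assms dws False in auto)
  also have "\<dots> \<le> val \<rho> g vs"
  proof (rule val_le)
    show "ws \<noteq> []" by (metis dws(2) False set_empty)
    fix k assume k: "k < length ws"
    show "real (Suc k) * \<rho> + g (ws ! k) \<le> val \<rho> g vs"
    proof (cases "k < i")
      case True
      then show ?thesis using ws_nth[OF k] val_ge[of k vs \<rho> g] k lws by simp
    next
      case False
      have "real (Suc k) * \<rho> + g (ws ! k) \<le> real (Suc (Suc k)) * \<rho> + g (vs ! Suc k)"
        using ws_nth[OF k] False assms(3) by (simp add: mult_right_mono)
      also have "\<dots> \<le> val \<rho> g vs" by (rule val_ge) (use k lws in simp)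
      finally show ?thesis .
    qed
  qed
  finally show ?thesis using vs by simp
qed

lemma F5: assumes "finite N" "\<forall>v\<in>N. g v \<le> h v + c" "c \<ge> 0"
  shows "sv \<rho> g N \<le> sv \<rho> h N + c"
proof (cases "N = {}")
  case True then show ?thesis using assms by (simp add: sv_def)
next
  case False
  obtain vs where vs: "distinct vs" "set vs = N" "sv \<rho> h N = val \<rho> h vs"
    using sv_attained[OF assms(1) False] by blast
  have "sv \<rho> g N \<le> val \<rho> g vs" by (rule F2) (use assms vs False in auto)
  also have "\<dots> \<le> val \<rho> h vs + c"
  proof (rule val_le)
    show "vs \<noteq> []" using vs False by auto
    fix k assume k: "k < length vs"
    have "vs ! k \<in> N" using k vs by auto
    then have "real (Suc k) * \<rho> + g (vs ! k) \<le> real (Suc k) * \<rho> + h (vs ! k) + c" using assms by force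
    also have "\<dots> \<le> val \<rho> h vs + c" using val_ge[OF k, of \<rho> h] by simp
    finally show "real (Suc k) * \<rho> + g (vs ! k) \<le> val \<rho> h vs + c" .
  qed
  finally show ?thesis using vs by simp
qed

lemma sv_cong: "\<forall>v\<in>N. g v = h v \<Longrightarrow> sv \<rho> g N = sv \<rho> h N"
proof -
  assume a: "\<forall>v\<in>N. g v = h v"
  have "val \<rho> g vs = val \<rho> h vs" if "set vs = N" for vs
    unfolding val_def using a that by (intro arg_cong[where f=Max] image_cong) auto
  then show ?thesis unfolding sv_def by (auto intro!: arg_cong[where f=Min] image_cong)
qed



lemma comp_sub: "comp E W u v \<subseteq> insert v (W - {u})"
proof
  fix z assume "z \<in> comp E W u v"
  then have "(v,z) \<in> (adj E (W - {u}))\<^sup>*" unfolding comp_def by simp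
  then show "z \<in> insert v (W - {u})"
    by (induction rule: rtrancl_induct) (auto simp: adj_def)
qed

lemma comp_self: "v \<in> comp E W u v" unfolding comp_def by simp

lemma comp_reach: "z \<in> comp E W u v \<longleftrightarrow> (v,z) \<in> (adj E (W - {u}))\<^sup>*" unfolding comp_def by simp

lemma comp_eq: "(a,b) \<in> (adj E (W - {u}))\<^sup>* \<Longrightarrow> comp E W u a = comp E W u b"
  unfolding comp_def by (auto intro: rtrancl_trans rt_sym)

lemma reach_restrict:
  assumes "(v,z) \<in> (adj E S)\<^sup>*" "\<And>y. (v,y) \<in> (adj E S)\<^sup>* \<Longrightarrow> y \<in> S'"
  shows "(v,z) \<in> (adj E (S \<inter> S'))\<^sup>*"
  using assms(1)
proof (induction rule: rtrancl_induct)
  case base then show ?case by simp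
next
  case (step y z)
  have "y \<in> S'" using assms(2) step(1) .
  moreover have "z \<in> S'" using assms(2) step(1,2) by (meson rtrancl.rtrancl_into_rtrancl)
  ultimately have "(y,z) \<in> adj E (S \<inter> S')" using step(2) unfolding adj_def by auto
  then show ?case using step(3) by (meson rtrancl.rtrancl_into_rtrancl)
qed

lemma edge_in_V: "is_tree V E \<Longrightarrow> {a,b} \<in> E \<Longrightarrow> a \<in> V \<and> b \<in> V \<and> a \<noteq> b"
  using tree_edge[of V E "{a,b}"] by (auto simp: doubleton_eq_iff)

lemma adj_edge: "{a,b} \<in> E \<Longrightarrow> a \<in> S \<Longrightarrow> b \<in> S \<Longrightarrow> (a,b) \<in> adj E S"
  unfolding adj_def by simp

lemma bridge:
  assumes t: "is_tree V E" and e: "{a,b} \<in> E"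
  shows "comp E V a b \<inter> comp E V b a = {}"
proof (rule ccontr)
  assume "comp E V a b \<inter> comp E V b a \<noteq> {}"
  then obtain z where z: "(b,z) \<in> (adj E (V - {a}))\<^sup>*" "(a,z) \<in> (adj E (V - {b}))\<^sup>*"
    unfolding comp_def by auto
  have s1: "adj E (V - {a}) \<subseteq> adj (E - {{a,b}}) V" unfolding adj_def by (auto simp: doubleton_eq_iff)
  have s2: "adj E (V - {b}) \<subseteq> adj (E - {{a,b}}) V" unfolding adj_def by (auto simp: doubleton_eq_iff)
  have "(b,z) \<in> (adj (E - {{a,b}}) V)\<^sup>*" using z(1) rtrancl_mono[OF s1] by blast
  moreover have "(a,z) \<in> (adj (E - {{a,b}}) V)\<^sup>*" using z(2) rtrancl_mono[OF s2] by blast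
  ultimately have "(a,b) \<in> (adj (E - {{a,b}}) V)\<^sup>*" by (meson rt_sym rtrancl_trans)
  then show False using bridge0[OF t e] by simp
qed

lemma cover:
  assumes t: "is_tree V E" and e: "{a,b} \<in> E"
  shows "comp E V a b \<union> comp E V b a = V"
proof -
  have ab: "a \<in> V" "b \<in> V" "a \<noteq> b" using edge_in_V[OF t e] by auto
  have conn: "\<forall>a\<in>V. \<forall>b\<in>V. (a,b) \<in> (adj E V)\<^sup>*" using t unfolding is_tree_def by auto
  have "z \<in> comp E V a b \<union> comp E V b a" if "(a,z) \<in> (adj E V)\<^sup>*" for z
    using that
  proof (induction rule: rtrancl_induct)
    case base then show ?case using comp_self by fast
  next
    case (step y z)
    have yz: "y \<in> V" "z \<in> V" "{y,z} \<in> E" using step(2) unfolding adj_def by auto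
    from step(3) show ?case
    proof
      assume y: "y \<in> comp E V a b"
      have yn: "y \<noteq> a" using y comp_sub[of E V a b] ab by auto
      show ?case
      proof (cases "z = a")
        case True then show ?thesis using comp_self by fast
      next
        case False
        have "(y,z) \<in> adj E (V - {a})" using yz yn False unfolding adj_def by auto
        moreover have "(b,y) \<in> (adj E (V - {a}))\<^sup>*" using y by (simp add: comp_reach)
        ultimately have "(b,z) \<in> (adj E (V - {a}))\<^sup>*" by simp
        then show ?thesis by (simp add: comp_reach)
      qed
    next
      assume y: "y \<in> comp E V b a"
      have yn: "y \<noteq> b" using y comp_sub[of E V b a] ab by auto
      show ?case
      proof (cases "z = b")
        case True then show ?thesis using comp_self by fast
      next
        case False
        have "(y,z) \<in> adj E (V - {b})" using yz yn False unfolding adj_def by auto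
        moreover have "(a,y) \<in> (adj E (V - {b}))\<^sup>*" using y by (simp add: comp_reach)
        ultimately have "(a,z) \<in> (adj E (V - {b}))\<^sup>*" by simp
        then show ?thesis by (simp add: comp_reach)
      qed
    qed
  qed
  then have "V \<subseteq> comp E V a b \<union> comp E V b a" using conn ab by blast
  moreover have "comp E V a b \<union> comp E V b a \<subseteq> V" using comp_sub[of E V a b] comp_sub[of E V b a] ab by auto
  ultimately show ?thesis by blast
qed

lemma Tbar_eq:
  assumes t: "is_tree V E" and e: "{a,b} \<in> E"
  shows "Tbar E V a b = comp E V b a"
  unfolding Tbar_def Tsub_def using bridge[OF t e] cover[OF t e] by blast

lemma nest:
  assumes "u \<in> W" "W \<subseteq> V" "comp E V u v \<subseteq> W"
  shows "comp E W u v = comp E V u v"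
proof
  show "comp E W u v \<subseteq> comp E V u v" unfolding comp_def using rt_mono[of "W - {u}" "V - {u}" E E] assms by auto
next
  show "comp E V u v \<subseteq> comp E W u v"
  proof
    fix z assume "z \<in> comp E V u v"
    then have "(v,z) \<in> (adj E (V - {u}))\<^sup>*" by (simp add: comp_reach)
    then have "(v,z) \<in> (adj E ((V - {u}) \<inter> W))\<^sup>*"
      by (rule reach_restrict) (use assms(3) in \<open>auto simp: comp_reach\<close>)
    moreover have "(V - {u}) \<inter> W = W - {u}" using assms by auto
    ultimately show "z \<in> comp E W u v" by (simp add: comp_reach)
  qed
qed

lemma subside:
  assumes t: "is_tree V E" and e1: "{a,u} \<in> E" and e2: "{u,v} \<in> E" and av: "a \<noteq> v"
  shows "comp E V u v \<subseteq> comp E V a u"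
proof
  have au: "a \<in> V" "u \<in> V" "a \<noteq> u" using edge_in_V[OF t e1] by auto
  have uv: "v \<in> V" "u \<noteq> v" using edge_in_V[OF t e2] by auto
  have "(u,a) \<in> adj E (V - {v})" using e1 au uv av unfolding adj_def by (auto simp: insert_commute)
  then have "a \<in> comp E V v u" unfolding comp_def by auto
  then have anot: "a \<notin> comp E V u v" using bridge[OF t e2] by auto
  fix z assume "z \<in> comp E V u v"
  then have "(v,z) \<in> (adj E (V - {u}))\<^sup>*" by (simp add: comp_reach)
  then have "(v,z) \<in> (adj E ((V - {u}) \<inter> comp E V u v))\<^sup>*"
    by (rule reach_restrict) (auto simp: comp_reach)
  moreover have sub: "(V - {u}) \<inter> comp E V u v \<subseteq> V - {a}" using anot by auto
  ultimately have "(v,z) \<in> (adj E (V - {a}))\<^sup>*" using rt_mono[OF sub order_refl] by blast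
  moreover have "(u,v) \<in> adj E (V - {a})" using e2 au uv av unfolding adj_def by auto
  ultimately have "(u,z) \<in> (adj E (V - {a}))\<^sup>*" by (meson converse_rtrancl_into_rtrancl)
  then show "z \<in> comp E V a u" by (simp add: comp_reach)
qed

lemma nbrs_side:
  assumes t: "is_tree V E" and e: "{a,u} \<in> E"
  shows "nbrs E (comp E V a u) u = nbrs E V u - {a}"
proof -
  have au: "a \<in> V" "u \<in> V" "a \<noteq> u" using edge_in_V[OF t e] by auto
  have "z \<in> comp E V a u" if "z \<in> V" "{u,z} \<in> E" "z \<noteq> a" for z
  proof -
    have "(u,z) \<in> adj E (V - {a})" using that au unfolding adj_def by auto
    then show ?thesis unfolding comp_def by auto
  qed
  moreover have "comp E V a u \<subseteq> V - {a}" using comp_sub[of E V a u] au by auto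
  ultimately show ?thesis unfolding nbrs_def by auto
qed

lemma walk_reach:
  assumes "\<And>k. i \<le> k \<Longrightarrow> k < j \<Longrightarrow> (f k, f (Suc k)) \<in> R" "i \<le> j"
  shows "(f i, f j) \<in> R\<^sup>*"
  using assms
proof (induction j)
  case 0 then show ?case by simp
next
  case (Suc j)
  show ?case
  proof (cases "i = Suc j")
    case True then show ?thesis by simp
  next
    case False
    then have "(f i, f j) \<in> R\<^sup>*" using Suc by simp
    moreover have "(f j, f (Suc j)) \<in> R" using Suc False by simp
    ultimately show ?thesis by simp
  qed
qed



lemma bt_sv: "bt \<rho> E t (Suc n) W u = sv \<rho> (\<lambda>v. t {u,v} + bt \<rho> E t n (comp E W u v) v) (nbrs E W u)"
  by (simp add: sv_def val_def add.assoc)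

lemma nbrs_sub: "\<forall>z. {z} \<notin> E \<Longrightarrow> nbrs E W u \<subseteq> W - {u}"
  unfolding nbrs_def by auto

lemma comp_in: "\<forall>z. {z} \<notin> E \<Longrightarrow> v \<in> nbrs E W u \<Longrightarrow> comp E W u v \<subseteq> W - {u}"
  using comp_sub[of E W u v] nbrs_sub[of E W u] by auto

lemma card_comp: "finite W \<Longrightarrow> u \<in> W \<Longrightarrow> \<forall>z. {z} \<notin> E \<Longrightarrow> v \<in> nbrs E W u \<Longrightarrow> card (comp E W u v) < card W"
proof -
  assume a: "finite W" "u \<in> W" "\<forall>z. {z} \<notin> E" "v \<in> nbrs E W u"
  have "comp E W u v \<subseteq> W - {u}" using comp_in[OF a(3,4)] .
  then have "card (comp E W u v) \<le> card (W - {u})" using a(1) by (intro card_mono) auto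
  also have "\<dots> < card W" using a(1,2) by (rule card_Diff1_less)
  finally show ?thesis .
qed

lemma fuel:
  assumes "\<forall>z. {z} \<notin> E"
  shows "finite W \<Longrightarrow> u \<in> W \<Longrightarrow> card W \<le> n \<Longrightarrow> card W \<le> n' \<Longrightarrow> bt \<rho> E t n W u = bt \<rho> E t n' W u"
proof (induction n arbitrary: n' W u)
  case 0
  then have "card W > 0" using card_gt_0_iff by blast
  then show ?case using 0 by simp
next
  case (Suc k)
  have "card W > 0" using Suc.prems(1,2) card_gt_0_iff by blast
  then have "n' > 0" using Suc.prems(4) by simp
  then obtain k' where k': "n' = Suc k'" using gr0_implies_Suc by blast
  have "bt \<rho> E t k (comp E W u v) v = bt \<rho> E t k' (comp E W u v) v" if v: "v \<in> nbrs E W u" for v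
  proof (rule Suc.IH)
    have "comp E W u v \<subseteq> W - {u}" using comp_in[OF assms v] .
    then show "finite (comp E W u v)" using Suc.prems(1) by (meson finite_Diff finite_subset)
    show "v \<in> comp E W u v" by (rule comp_self)
    have "card (comp E W u v) < card W" using card_comp[OF Suc.prems(1,2) assms v] .
    then show "card (comp E W u v) \<le> k" "card (comp E W u v) \<le> k'" using Suc.prems k' by auto
  qed
  then show ?case unfolding k' bt_sv by (intro sv_cong) auto
qed

lemma REC:
  assumes nl: "\<forall>z. {z} \<notin> E" and W: "finite W" "u \<in> W"
  shows "btime \<rho> E t W u = sv \<rho> (\<lambda>v. t {u,v} + btime \<rho> E t (comp E W u v) v) (nbrs E W u)"
proof -
  have "card W > 0" using W card_gt_0_iff by blast
  then obtain n where n: "card W = Suc n" using gr0_implies_Suc by blast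
  have "bt \<rho> E t n (comp E W u v) v = btime \<rho> E t (comp E W u v) v" if v: "v \<in> nbrs E W u" for v
    unfolding btime_def
  proof (rule fuel[OF nl])
    have "comp E W u v \<subseteq> W - {u}" using comp_in[OF nl v] .
    then show "finite (comp E W u v)" using W by (meson finite_Diff finite_subset)
    show "v \<in> comp E W u v" by (rule comp_self)
    have "card (comp E W u v) < card W" using card_comp[OF W nl v] .
    then show "card (comp E W u v) \<le> n" using n by simp
  qed simp
  then show ?thesis unfolding btime_def n bt_sv by (intro sv_cong) auto
qed

lemma comp_fin: "\<forall>z. {z} \<notin> E \<Longrightarrow> finite W \<Longrightarrow> v \<in> nbrs E W u \<Longrightarrow> finite (comp E W u v)"
  using comp_in by (metis finite_Diff finite_subset)

lemma nbrs_fin: "finite W \<Longrightarrow> finite (nbrs E W u)"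
  unfolding nbrs_def by simp

lemma bt_nonneg:
  assumes nl: "\<forall>z. {z} \<notin> E" and nn: "\<forall>e\<in>E. t e \<ge> 0" and r: "\<rho> \<ge> 0"
  shows "finite W \<Longrightarrow> u \<in> W \<Longrightarrow> btime \<rho> E t W u \<ge> 0"
proof (induction "card W" arbitrary: W u rule: less_induct)
  case less
  have "t {u,v} + btime \<rho> E t (comp E W u v) v \<ge> 0" if v: "v \<in> nbrs E W u" for v
  proof -
    have "btime \<rho> E t (comp E W u v) v \<ge> 0"
      using less.hyps[OF card_comp[OF less.prems nl v] comp_fin[OF nl less.prems(1) v] comp_self] .
    moreover have "t {u,v} \<ge> 0" using nn v unfolding nbrs_def by auto
    ultimately show ?thesis by simp
  qed
  then show ?case unfolding REC[OF nl less.prems] by (intro sv_nonneg nbrs_fin less.prems r) auto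
qed

lemma locality:
  assumes nl: "\<forall>z. {z} \<notin> E"
  shows "finite W \<Longrightarrow> u \<in> W \<Longrightarrow> \<forall>e\<in>E. e \<subseteq> W \<longrightarrow> t e = t' e \<Longrightarrow> btime \<rho> E t W u = btime \<rho> E t' W u"
proof (induction "card W" arbitrary: W u rule: less_induct)
  case less
  have "t {u,v} + btime \<rho> E t (comp E W u v) v = t' {u,v} + btime \<rho> E t' (comp E W u v) v"
    if v: "v \<in> nbrs E W u" for v
  proof -
    have C: "comp E W u v \<subseteq> W" using comp_in[OF nl v] by auto
    have "btime \<rho> E t (comp E W u v) v = btime \<rho> E t' (comp E W u v) v"
      by (rule less.hyps[OF card_comp[OF less.prems(1,2) nl v] comp_fin[OF nl less.prems(1) v] comp_self])
         (use less.prems(3) C in auto)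
    moreover have "t {u,v} = t' {u,v}" using less.prems v unfolding nbrs_def by auto
    ultimately show ?thesis by simp
  qed
  then show ?case unfolding REC[OF nl less.prems(1,2)] by (intro sv_cong) auto
qed

lemma lipschitz:
  assumes nl: "\<forall>z. {z} \<notin> E" and F: "finite F" "\<forall>e\<in>F. \<delta> e \<ge> 0"
    and le: "\<forall>e\<in>E. t e \<le> t' e + (if e \<in> F then \<delta> e else 0)"
  shows "finite W \<Longrightarrow> u \<in> W \<Longrightarrow> btime \<rho> E t W u \<le> btime \<rho> E t' W u + (\<Sum>e\<in>{e\<in>F. e \<subseteq> W}. \<delta> e)"
proof (induction "card W" arbitrary: W u rule: less_induct)
  case less
  let ?c = "\<lambda>W. (\<Sum>e\<in>{e\<in>F. e \<subseteq> W}. \<delta> e)"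
  have "t {u,v} + btime \<rho> E t (comp E W u v) v \<le> (t' {u,v} + btime \<rho> E t' (comp E W u v) v) + ?c W"
    if v: "v \<in> nbrs E W u" for v
  proof -
    let ?C = "comp E W u v"
    have C: "?C \<subseteq> W - {u}" using comp_in[OF nl v] by auto
    have IH: "btime \<rho> E t ?C v \<le> btime \<rho> E t' ?C v + ?c ?C"
      by (rule less.hyps[OF card_comp[OF less.prems(1,2) nl v] comp_fin[OF nl less.prems(1) v] comp_self])
    have uvE: "{u,v} \<in> E" "{u,v} \<subseteq> W" using v less.prems unfolding nbrs_def by auto
    have tuv: "t {u,v} \<le> t' {u,v} + (if {u,v} \<in> F then \<delta> {u,v} else 0)" using le uvE by auto
    have fin: "finite {e\<in>F. e \<subseteq> W}" using F by simp
    have sub: "{e\<in>F. e \<subseteq> ?C} \<subseteq> {e\<in>F. e \<subseteq> W}" using C by auto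
    have "(if {u,v} \<in> F then \<delta> {u,v} else 0) + ?c ?C \<le> ?c W"
    proof (cases "{u,v} \<in> F")
      case True
      have nin: "{u,v} \<notin> {e\<in>F. e \<subseteq> ?C}" using C by auto
      have "(if {u,v} \<in> F then \<delta> {u,v} else 0) + ?c ?C = (\<Sum>e\<in>insert {u,v} {e\<in>F. e \<subseteq> ?C}. \<delta> e)"
        using True nin F(1) by (simp add: sum.insert)
      also have "\<dots> \<le> ?c W"
        by (rule sum_mono2[OF fin]) (use sub True uvE F(2) in auto)
      finally show ?thesis .
    next
      case False
      then show ?thesis using sum_mono2[OF fin sub] F(2) by auto
    qed
    then show ?thesis using IH tuv by simp
  qed
  moreover have "?c W \<ge> 0" by (intro sum_nonneg) (use F(2) in auto)
  ultimately show ?case unfolding REC[OF nl less.prems(1,2)] by (intro F5 nbrs_fin less.prems) auto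
qed



lemma path_exists:
  assumes "(a,b) \<in> (adj E V)\<^sup>*"
  shows "\<exists>xs. is_path E xs \<and> hd xs = a \<and> last xs = b"
  using assms
proof (induction rule: rtrancl_induct)
  case base
  have "is_path E [a]" unfolding is_path_def by simp
  then show ?case by force
next
  case (step y z)
  obtain xs where xs: "is_path E xs" "hd xs = a" "last xs = y" using step.IH by blast
  have yz: "{y,z} \<in> E" using step(2) unfolding adj_def by auto
  have ne: "xs \<noteq> []" and dxs: "distinct xs" and exs: "\<forall>i < length xs - 1. {xs ! i, xs ! Suc i} \<in> E"
    using xs(1) unfolding is_path_def by auto
  show ?case
  proof (cases "z \<in> set xs")
    case True
    then obtain j where j: "j < length xs" "xs ! j = z" by (metis in_set_conv_nth)
    define ys where "ys = take (Suc j) xs"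
    have lys: "length ys = Suc j" using j unfolding ys_def by simp
    have "is_path E ys" unfolding is_path_def
    proof (intro conjI allI impI)
      show "ys \<noteq> []" using lys by auto
      show "distinct ys" unfolding ys_def using dxs by simp
      fix i assume i: "i < length ys - 1"
      then have "i < length xs - 1" using lys j by simp
      then have "{xs ! i, xs ! Suc i} \<in> E" using exs by simp
      then show "{ys ! i, ys ! Suc i} \<in> E" using i lys unfolding ys_def by simp
    qed
    moreover have "hd ys = a" using xs(2) ne unfolding ys_def by simp
    moreover have "last ys = z"
    proof -
      have "last ys = ys ! (length ys - 1)" using lys by (intro last_conv_nth) auto
      also have "\<dots> = xs ! j" using lys unfolding ys_def by simp
      finally show ?thesis using j by simp
    qed
    ultimately show ?thesis by blast
  next
    case False
    define ys where "ys = xs @ [z]"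
    have "is_path E ys" unfolding is_path_def
    proof (intro conjI allI impI)
      show "ys \<noteq> []" unfolding ys_def by simp
      show "distinct ys" unfolding ys_def using dxs False by simp
      fix i assume i: "i < length ys - 1"
      show "{ys ! i, ys ! Suc i} \<in> E"
      proof (cases "i < length xs - 1")
        case True
        then have "Suc i < length xs" by simp
        then show ?thesis using exs True unfolding ys_def by (simp add: nth_append)
      next
        case False
        then have "i = length xs - 1" using i unfolding ys_def by simp
        then have "ys ! i = y" "ys ! Suc i = z" using ne xs(3) unfolding ys_def
          by (auto simp: nth_append last_conv_nth)
        then show ?thesis using yz by simp
      qed
    qed
    moreover have "hd ys = a" using xs(2) ne unfolding ys_def by simp
    moreover have "last ys = z" unfolding ys_def by simp
    ultimately show ?thesis by blast
  qed
qed

lemma nth_distinct_eq: "distinct xs \<Longrightarrow> i < length xs \<Longrightarrow> j < length xs \<Longrightarrow> xs ! i = xs ! j \<Longrightarrow> i = j"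
  using nth_eq_iff_index_eq by blast

lemma path_edge_in:
  assumes t: "is_tree V E"
    and xs: "is_path E xs" "hd xs = x" "last xs = y"
    and ys: "is_path E ys" "hd ys = x" "last ys = y"
    and i: "i < length ys - 1"
  shows "\<exists>j < length xs - 1. {ys ! i, ys ! Suc i} = {xs ! j, xs ! Suc j}"
proof (rule ccontr)
  assume nex: "\<not> ?thesis"
  let ?a = "ys ! i" and ?b = "ys ! Suc i"
  let ?F = "E - {{?a, ?b}}"
  have dys: "distinct ys" and eys: "\<forall>i < length ys - 1. {ys ! i, ys ! Suc i} \<in> E" and ney: "ys \<noteq> []"
    using ys(1) unfolding is_path_def by auto
  have dxs: "distinct xs" and exs: "\<forall>i < length xs - 1. {xs ! i, xs ! Suc i} \<in> E" and nex': "xs \<noteq> []"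
    using xs(1) unfolding is_path_def by auto
  have e: "{?a, ?b} \<in> E" using eys i by simp
  have stepF: "(f k, f (Suc k)) \<in> adj ?F V" if "{f k, f (Suc k)} \<in> E" "{f k, f (Suc k)} \<noteq> {?a, ?b}" for f :: "nat \<Rightarrow> 'a" and k
    using that edge_in_V[OF t that(1)] unfolding adj_def by auto
  have r1: "(xs ! 0, xs ! (length xs - 1)) \<in> (adj ?F V)\<^sup>*"
  proof (rule walk_reach[where f = "(!) xs"])
    fix k assume k: "0 \<le> k" "k < length xs - 1"
    show "(xs ! k, xs ! Suc k) \<in> adj ?F V"
      by (rule stepF[where f = "(!) xs"]) (use exs k nex in auto)
  qed simp
  have r2: "(ys ! 0, ?a) \<in> (adj ?F V)\<^sup>*"
  proof (rule walk_reach[where f = "(!) ys"])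
    fix k assume k: "0 \<le> k" "k < i"
    have ne: "{ys ! k, ys ! Suc k} \<noteq> {?a, ?b}"
    proof
      assume "{ys ! k, ys ! Suc k} = {?a, ?b}"
      then have "ys ! k = ?a \<or> ys ! k = ?b" by blast
      moreover have l: "k < length ys" "i < length ys" "Suc i < length ys" using k i by auto
      ultimately show False
      proof (elim disjE)
        assume "ys ! (k) = ?a"
        then have "k = i" using nth_distinct_eq[OF dys l(1) l(2)] by blast
        then show False using k by simp
      next
        assume "ys ! (k) = ?b"
        then have "k = Suc i" using nth_distinct_eq[OF dys l(1) l(3)] by blast
        then show False using k by simp
      qed
    qed
    show "(ys ! k, ys ! Suc k) \<in> adj ?F V"
      by (rule stepF[where f = "(!) ys"]) (use eys k i ne in auto)
  qed simp
  have r3: "(?b, ys ! (length ys - 1)) \<in> (adj ?F V)\<^sup>*"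
  proof (rule walk_reach[where f = "(!) ys"])
    fix k assume k: "Suc i \<le> k" "k < length ys - 1"
    have ne: "{ys ! k, ys ! Suc k} \<noteq> {?a, ?b}"
    proof
      assume "{ys ! k, ys ! Suc k} = {?a, ?b}"
      then have "ys ! Suc k = ?a \<or> ys ! Suc k = ?b" by blast
      moreover have l: "Suc k < length ys" "i < length ys" "Suc i < length ys" using k i by auto
      ultimately show False
      proof (elim disjE)
        assume "ys ! (Suc k) = ?a"
        then have "Suc k = i" using nth_distinct_eq[OF dys l(1) l(2)] by blast
        then show False using k by simp
      next
        assume "ys ! (Suc k) = ?b"
        then have "Suc k = Suc i" using nth_distinct_eq[OF dys l(1) l(3)] by blast
        then show False using k by simp
      qed
    qed
    show "(ys ! k, ys ! Suc k) \<in> adj ?F V"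
      by (rule stepF[where f = "(!) ys"]) (use eys k i ne in auto)
  qed (use i in simp)
  have "xs ! 0 = x" "ys ! 0 = x" using xs(2) ys(2) nex' ney by (auto simp: hd_conv_nth)
  moreover have "xs ! (length xs - 1) = y" "ys ! (length ys - 1) = y"
    using xs(3) ys(3) nex' ney by (auto simp: last_conv_nth)
  ultimately have q1: "(x,y) \<in> (adj ?F V)\<^sup>*" and q2: "(x,?a) \<in> (adj ?F V)\<^sup>*" and q3: "(?b,y) \<in> (adj ?F V)\<^sup>*"
    using r1 r2 r3 by simp_all
  have "(?a,y) \<in> (adj ?F V)\<^sup>*" using rt_sym[OF q2] q1 by (rule rtrancl_trans)
  then have "(?a, ?b) \<in> (adj ?F V)\<^sup>*" using rt_sym[OF q3] by (rule rtrancl_trans)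
  then show False using bridge0[OF t e] by simp
qed



definition Rt :: "real \<Rightarrow> 'v set set \<Rightarrow> 'v set \<Rightarrow> ('v set \<Rightarrow> real) \<Rightarrow> 'v \<Rightarrow> 'v \<Rightarrow> real" where
  "Rt \<rho> E V t a u = btime \<rho> E t (comp E V a u) u"

lemma tree_nl: "is_tree V E \<Longrightarrow> \<forall>z. {z} \<notin> E"
proof (intro allI notI)
  fix z assume t: "is_tree V E" and z: "{z} \<in> E"
  then obtain a b where ab: "{z} = {a,b}" "a \<noteq> b" using tree_edge[OF t z] by blast
  then have "a = z" "b = z" by (metis insertI1 insert_commute singletonD)+
  then show False using ab by simp
qed

lemma tree_fin: "is_tree V E \<Longrightarrow> finite V"
  unfolding is_tree_def by simp

lemma ROOT_V:
  assumes t: "is_tree V E" and u: "u \<in> V"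
  shows "btime \<rho> E s V u = sv \<rho> (\<lambda>z. s {u,z} + Rt \<rho> E V s u z) (nbrs E V u)"
  unfolding Rt_def by (rule REC[OF tree_nl[OF t] tree_fin[OF t] u])

lemma side_fin: "is_tree V E \<Longrightarrow> {a,u} \<in> E \<Longrightarrow> finite (comp E V a u) \<and> u \<in> comp E V a u \<and> comp E V a u \<subseteq> V"
proof -
  assume t: "is_tree V E" and e: "{a,u} \<in> E"
  have "u \<in> V" using edge_in_V[OF t e] by simp
  then have "comp E V a u \<subseteq> V" using comp_sub[of E V a u] by auto
  then show ?thesis using tree_fin[OF t] comp_self[of u E V a] finite_subset by blast
qed

lemma ROOT_R:
  assumes t: "is_tree V E" and e: "{a,u} \<in> E"
  shows "Rt \<rho> E V s a u = sv \<rho> (\<lambda>z. s {u,z} + Rt \<rho> E V s u z) (nbrs E V u - {a})"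
proof -
  let ?W = "comp E V a u"
  have W: "finite ?W" "u \<in> ?W" "?W \<subseteq> V" using side_fin[OF t e] by auto
  have "Rt \<rho> E V s a u = sv \<rho> (\<lambda>z. s {u,z} + btime \<rho> E s (comp E ?W u z) z) (nbrs E ?W u)"
    unfolding Rt_def by (rule REC[OF tree_nl[OF t] W(1,2)])
  also have "nbrs E ?W u = nbrs E V u - {a}" by (rule nbrs_side[OF t e])
  also have "sv \<rho> (\<lambda>z. s {u,z} + btime \<rho> E s (comp E ?W u z) z) (nbrs E V u - {a})
           = sv \<rho> (\<lambda>z. s {u,z} + Rt \<rho> E V s u z) (nbrs E V u - {a})"
  proof (rule sv_cong, rule ballI)
    fix z assume z: "z \<in> nbrs E V u - {a}"
    then have uz: "{u,z} \<in> E" "z \<noteq> a" unfolding nbrs_def by auto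
    have "comp E V u z \<subseteq> ?W" by (rule subside[OF t e uz(1)]) (use uz in auto)
    then have "comp E ?W u z = comp E V u z" by (rule nest[OF W(2,3)])
    then show "s {u,z} + btime \<rho> E s (comp E ?W u z) z = s {u,z} + Rt \<rho> E V s u z"
      unfolding Rt_def by simp
  qed
  finally show ?thesis .
qed

lemma Rt_nonneg:
  assumes t: "is_tree V E" and e: "{a,u} \<in> E" and nn: "\<forall>e\<in>E. s e \<ge> 0" and r: "\<rho> \<ge> 0"
  shows "Rt \<rho> E V s a u \<ge> 0"
  unfolding Rt_def using bt_nonneg[OF tree_nl[OF t] nn r] side_fin[OF t e] by blast

definition pd :: "real \<Rightarrow> ('v set \<Rightarrow> real) \<Rightarrow> 'v list \<Rightarrow> nat \<Rightarrow> real" where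
  "pd \<rho> s xs i = (\<Sum>k\<in>{i..<length xs - 1}. \<rho> + s {xs ! k, xs ! Suc k})"

lemma pd_step: "i < length xs - 1 \<Longrightarrow> pd \<rho> s xs i = \<rho> + s {xs ! i, xs ! Suc i} + pd \<rho> s xs (Suc i)"
  unfolding pd_def by (simp add: sum.atLeast_Suc_lessThan)

lemma pd_end: "pd \<rho> s xs (length xs - 1) = 0"
  unfolding pd_def by simp

lemma pd_nonneg: "\<rho> \<ge> 0 \<Longrightarrow> (\<forall>k < length xs - 1. s {xs ! k, xs ! Suc k} \<ge> 0) \<Longrightarrow> pd \<rho> s xs i \<ge> 0"
  unfolding pd_def by (intro sum_nonneg) auto

locale pathctx =
  fixes V :: "'v set" and E :: "'v set set" and xs :: "'v list" and m :: nat and \<rho> :: real and s :: "'v set \<Rightarrow> real"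
  assumes t: "is_tree V E" and xp: "is_path E xs" and len: "length xs = Suc m" and m1: "m \<ge> 1"
    and r: "\<rho> > 0" and nn: "\<forall>e\<in>E. s e \<ge> 0"
begin

lemma dxs: "distinct xs" using xp unfolding is_path_def by simp

lemma edge: "i < m \<Longrightarrow> {xs ! i, xs ! Suc i} \<in> E"
  using xp len unfolding is_path_def by auto

lemma edge': "i < m \<Longrightarrow> {xs ! Suc i, xs ! i} \<in> E"
  using edge by (simp add: insert_commute)

lemma nb1: "i < m \<Longrightarrow> xs ! Suc i \<in> nbrs E V (xs ! i)"
  using edge edge_in_V[OF t edge] unfolding nbrs_def by auto

lemma nb2: "i < m \<Longrightarrow> xs ! i \<in> nbrs E V (xs ! Suc i)"
  using edge' edge_in_V[OF t edge'] unfolding nbrs_def by auto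

lemma neq: "i \<le> m \<Longrightarrow> j \<le> m \<Longrightarrow> i \<noteq> j \<Longrightarrow> xs ! i \<noteq> xs ! j"
  using nth_distinct_eq[OF dxs, of i j] len by auto

lemma inV: "i \<le> m \<Longrightarrow> xs ! i \<in> V"
proof -
  assume i: "i \<le> m"
  show ?thesis
  proof (cases "i < m")
    case True then show ?thesis using edge_in_V[OF t edge[OF True]] by simp
  next
    case False
    then have "i = Suc (m - 1)" using i m1 by simp
    then show ?thesis using edge_in_V[OF t edge[of "m - 1"]] m1 by simp
  qed
qed

lemma x0: "xs ! 0 \<in> V" using inV by simp

lemma pdstep: "i < m \<Longrightarrow> pd \<rho> s xs i = \<rho> + s {xs ! i, xs ! Suc i} + pd \<rho> s xs (Suc i)"
  using pd_step[of i xs] len by simp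

lemma pdm: "pd \<rho> s xs m = 0" using pd_end[of \<rho> s xs] len by simp

lemma pdnn: "pd \<rho> s xs i \<ge> 0"
  using pd_nonneg[of \<rho> xs s i] r nn edge len by auto

lemma Rnn: "i < m \<Longrightarrow> Rt \<rho> E V s (xs ! i) (xs ! Suc i) \<ge> 0"
  using Rt_nonneg[OF t edge nn] r by simp

lemma Rnn': "i < m \<Longrightarrow> Rt \<rho> E V s (xs ! Suc i) (xs ! i) \<ge> 0"
  using Rt_nonneg[OF t edge' nn] r by simp

lemma chain_lb:
  assumes "1 \<le> i" "i \<le> m"
  shows "Rt \<rho> E V s (xs ! (i - 1)) (xs ! i) \<ge> pd \<rho> s xs i + Rt \<rho> E V s (xs ! (m - 1)) (xs ! m)"
  using assms(2,1)
proof (induction i rule: inc_induct)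
  case base then show ?case using pdm by simp
next
  case (step n)
  have n: "n < m" "1 \<le> n" using step by auto
  have e: "{xs ! (n - 1), xs ! n} \<in> E" using edge[of "n - 1"] n by simp
  have z: "xs ! Suc n \<in> nbrs E V (xs ! n) - {xs ! (n - 1)}" using nb1[OF n(1)] neq[of "Suc n" "n - 1"] n by auto
  have "\<rho> + (s {xs ! n, xs ! Suc n} + Rt \<rho> E V s (xs ! n) (xs ! Suc n)) \<le> Rt \<rho> E V s (xs ! (n - 1)) (xs ! n)"
    unfolding ROOT_R[OF t e] by (rule F1[OF _ z]) (use r tree_fin[OF t] nbrs_fin in auto)
  then show ?case using step.IH n pdstep[OF n(1)] by simp
qed

lemma x_lb: "btime \<rho> E s V (xs ! 0) \<ge> pd \<rho> s xs 0 + Rt \<rho> E V s (xs ! (m - 1)) (xs ! m)"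
proof -
  have z: "xs ! 1 \<in> nbrs E V (xs ! 0)" using nb1[of 0] m1 by simp
  have "\<rho> + (s {xs ! 0, xs ! 1} + Rt \<rho> E V s (xs ! 0) (xs ! 1)) \<le> btime \<rho> E s V (xs ! 0)"
    unfolding ROOT_V[OF t x0] by (rule F1[OF _ z]) (use r tree_fin[OF t] nbrs_fin in auto)
  moreover have "Rt \<rho> E V s (xs ! 0) (xs ! 1) \<ge> pd \<rho> s xs 1 + Rt \<rho> E V s (xs ! (m - 1)) (xs ! m)"
    using chain_lb[of 1] m1 by simp
  moreover have "pd \<rho> s xs 0 = \<rho> + s {xs ! 0, xs ! 1} + pd \<rho> s xs 1" using pdstep[of 0] m1 by simp
  ultimately show ?thesis by simp
qed

lemma rev_step:
  assumes "1 \<le> j" "j < m"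
  shows "Rt \<rho> E V s (xs ! j) (xs ! (j - 1)) \<le> Rt \<rho> E V s (xs ! Suc j) (xs ! j)"
proof -
  have e: "{xs ! Suc j, xs ! j} \<in> E" using edge'[of j] assms by simp
  have z: "xs ! (j - 1) \<in> nbrs E V (xs ! j) - {xs ! Suc j}"
    using nb2[of "j - 1"] neq[of "j - 1" "Suc j"] assms by auto
  have "\<rho> + (s {xs ! j, xs ! (j - 1)} + Rt \<rho> E V s (xs ! j) (xs ! (j - 1))) \<le> Rt \<rho> E V s (xs ! Suc j) (xs ! j)"
    unfolding ROOT_R[OF t e] by (rule F1[OF _ z]) (use r tree_fin[OF t] nbrs_fin in auto)
  moreover have "s {xs ! j, xs ! (j - 1)} \<ge> 0" using nn edge'[of "j - 1"] assms by simp
  ultimately show ?thesis using r by simp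
qed

lemma rev_chain:
  assumes "i < m"
  shows "Rt \<rho> E V s (xs ! Suc i) (xs ! i) \<le> Rt \<rho> E V s (xs ! m) (xs ! (m - 1))"
proof -
  have "i \<le> m - 1" using assms by simp
  then show ?thesis
  proof (induction i rule: inc_induct)
    case base then show ?case using m1 by simp
  next
    case (step n)
    have "Rt \<rho> E V s (xs ! Suc n) (xs ! n) \<le> Rt \<rho> E V s (xs ! Suc (Suc n)) (xs ! Suc n)"
      using rev_step[of "Suc n"] step(2) by simp
    then show ?case using step.IH by simp
  qed
qed

lemma gnn: "\<forall>z\<in>nbrs E V u. s {u,z} + Rt \<rho> E V s u z \<ge> 0"
proof
  fix z assume z: "z \<in> nbrs E V u"
  then have e: "{u,z} \<in> E" unfolding nbrs_def by simp
  show "s {u,z} + Rt \<rho> E V s u z \<ge> 0" using nn e Rt_nonneg[OF t e nn] r by simp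
qed

lemma chain_ub:
  assumes pr: "Rt \<rho> E V s (xs ! m) (xs ! (m - 1)) \<le> Rt \<rho> E V s (xs ! (m - 1)) (xs ! m)"
    and i: "1 \<le> i" "i \<le> m"
  shows "Rt \<rho> E V s (xs ! (i - 1)) (xs ! i) \<le> pd \<rho> s xs i + Rt \<rho> E V s (xs ! (m - 1)) (xs ! m)"
  using i(2,1)
proof (induction i rule: inc_induct)
  case base then show ?case using pdm by simp
next
  case (step n)
  let ?Rpy = "Rt \<rho> E V s (xs ! (m - 1)) (xs ! m)"
  let ?g = "\<lambda>z. s {xs ! n, z} + Rt \<rho> E V s (xs ! n) z"
  let ?N = "nbrs E V (xs ! n) - {xs ! (n - 1)}"
  have n: "n < m" "1 \<le> n" using step.hyps i(1) by auto
  have e: "{xs ! (n - 1), xs ! n} \<in> E" using edge[of "n - 1"] n by simp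
  have z: "xs ! Suc n \<in> ?N" using nb1[OF n(1)] neq[of "Suc n" "n - 1"] n by auto
  have fN: "finite ?N" using nbrs_fin[OF tree_fin[OF t]] by simp
  have "Rt \<rho> E V s (xs ! (n - 1)) (xs ! n) = sv \<rho> ?g ?N" by (rule ROOT_R[OF t e])
  also have "\<dots> \<le> max (\<rho> + ?g (xs ! Suc n)) (\<rho> + sv \<rho> ?g (?N - {xs ! Suc n}))"
    by (rule F3[OF fN z]) (use r in simp)
  also have "\<dots> \<le> pd \<rho> s xs n + ?Rpy"
  proof (rule max.boundedI)
    show "\<rho> + ?g (xs ! Suc n) \<le> pd \<rho> s xs n + ?Rpy" using step.IH pdstep[OF n(1)] by simp
  next
    let ?M = "nbrs E V (xs ! n) - {xs ! Suc n}"
    have eq: "?N - {xs ! Suc n} = ?M - {xs ! (n - 1)}" by auto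
    have w: "xs ! (n - 1) \<in> ?M" using nb2[of "n - 1"] neq[of "n - 1" "Suc n"] n by auto
    have fM: "finite ?M" using nbrs_fin[OF tree_fin[OF t]] by simp
    have "sv \<rho> ?g (?M - {xs ! (n - 1)}) \<le> sv \<rho> ?g ?M"
      by (rule F4a[OF fM w]) (use r gnn in auto)
    also have "\<dots> = Rt \<rho> E V s (xs ! Suc n) (xs ! n)" by (rule ROOT_R[OF t edge'[OF n(1)], symmetric])
    also have "\<dots> \<le> Rt \<rho> E V s (xs ! m) (xs ! (m - 1))" by (rule rev_chain[OF n(1)])
    also have "\<dots> \<le> ?Rpy" by (rule pr)
    finally have a: "sv \<rho> ?g (?N - {xs ! Suc n}) \<le> ?Rpy" using eq by simp
    have "pd \<rho> s xs n \<ge> \<rho>" using pdstep[OF n(1)] pdnn[of "Suc n"] nn edge[OF n(1)] by simp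
    then show "\<rho> + sv \<rho> ?g (?N - {xs ! Suc n}) \<le> pd \<rho> s xs n + ?Rpy" using a by simp
  qed
  finally show ?case .
qed

lemma x_ub:
  assumes pr: "Rt \<rho> E V s (xs ! m) (xs ! (m - 1)) \<le> Rt \<rho> E V s (xs ! (m - 1)) (xs ! m)"
  shows "btime \<rho> E s V (xs ! 0) \<le> pd \<rho> s xs 0 + Rt \<rho> E V s (xs ! (m - 1)) (xs ! m)"
proof -
  let ?Rpy = "Rt \<rho> E V s (xs ! (m - 1)) (xs ! m)"
  let ?g = "\<lambda>z. s {xs ! 0, z} + Rt \<rho> E V s (xs ! 0) z"
  let ?N = "nbrs E V (xs ! 0)"
  have z: "xs ! 1 \<in> ?N" using nb1[of 0] m1 by simp
  have fN: "finite ?N" using nbrs_fin[OF tree_fin[OF t]] by simp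
  have "btime \<rho> E s V (xs ! 0) = sv \<rho> ?g ?N" by (rule ROOT_V[OF t x0])
  also have "\<dots> \<le> max (\<rho> + ?g (xs ! 1)) (\<rho> + sv \<rho> ?g (?N - {xs ! 1}))"
    by (rule F3[OF fN z]) (use r in simp)
  also have "\<dots> \<le> pd \<rho> s xs 0 + ?Rpy"
  proof (rule max.boundedI)
    have "Rt \<rho> E V s (xs ! 0) (xs ! 1) \<le> pd \<rho> s xs 1 + ?Rpy" using chain_ub[OF pr, of 1] m1 by simp
    then show "\<rho> + ?g (xs ! 1) \<le> pd \<rho> s xs 0 + ?Rpy" using pdstep[of 0] m1 by simp
  next
    have "sv \<rho> ?g (?N - {xs ! 1}) = Rt \<rho> E V s (xs ! 1) (xs ! 0)"
      using ROOT_R[OF t edge'[of 0], symmetric] m1 by simp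
    also have "\<dots> \<le> Rt \<rho> E V s (xs ! m) (xs ! (m - 1))" using rev_chain[of 0] m1 by simp
    also have "\<dots> \<le> ?Rpy" by (rule pr)
    finally have a: "sv \<rho> ?g (?N - {xs ! 1}) \<le> ?Rpy" .
    have "pd \<rho> s xs 0 \<ge> \<rho>" using pdstep[of 0] pdnn[of 1] nn edge[of 0] m1 by simp
    then show "\<rho> + sv \<rho> ?g (?N - {xs ! 1}) \<le> pd \<rho> s xs 0 + ?Rpy" using a by simp
  qed
  finally show ?thesis .
qed

end



theorem fact1:
  fixes V :: "'v set" and E :: "'v set set" and wl wu :: "'v set \<Rightarrow> real" and \<rho> :: real
    and x y :: 'v and sdd :: "'v set \<Rightarrow> real"
  assumes "is_tree V E" and "\<rho> > 0"
    and "\<forall>e\<in>E. 0 \<le> wl e \<and> wl e \<le> wu e"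
    and "x \<in> V" and "y \<in> V" and "y \<noteq> x"
    and "worst_case \<rho> V E wl wu x sdd"
    and "prime_center \<rho> V E sdd y"
  defines "s \<equiv> (\<lambda>e. if e \<in> path_edges E x y \<union> edges_of E (Tsub E V y x)
                      then alpha V E wl wu x y e else sdd e)"
  shows "worst_case \<rho> V E wl wu x s \<and> y \<in> bcenters \<rho> V E s"
proof -
  note t = assms(1) and r = assms(2) and wlu = assms(3) and xV = assms(4) and yV = assms(5)
    and yx = assms(6) and wc = assms(7) and pc = assms(8)
  have nl: "\<forall>z. {z} \<notin> E" by (rule tree_nl[OF t])
  have fV: "finite V" by (rule tree_fin[OF t])
  have sddC: "sdd \<in> scenarios E wl wu" using wc unfolding worst_case_def by simp
  obtain y' where y'V: "y' \<in> V" and y'max: "\<forall>y2\<in>V. \<forall>t\<in>scenarios E wl wu. regret \<rho> V E t x y2 \<le> regret \<rho> V E sdd x y'"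
    using wc unfolding worst_case_def by blast
  have ycen: "btime \<rho> E sdd V y \<le> btime \<rho> E sdd V y'"
    using pc y'V unfolding prime_center_def bcenters_def by blast
  have sdd_b: "\<forall>e\<in>E. wl e \<le> sdd e \<and> sdd e \<le> wu e" using sddC unfolding scenarios_def by simp
  have conn: "\<forall>a\<in>V. \<forall>b\<in>V. (a,b) \<in> (adj E V)\<^sup>*" using t unfolding is_tree_def by auto
  have xy: "(x,y) \<in> (adj E V)\<^sup>*" using conn xV yV by blast
  obtain xs where xp: "is_path E xs" and hx: "hd xs = x" and ly: "last xs = y"
    using path_exists[OF xy] by (elim exE conjE)
  have ne: "xs \<noteq> []" using xp unfolding is_path_def by simp
  then obtain m where len: "length xs = Suc m" by (cases xs) auto
  have m1: "m \<ge> 1"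
  proof (rule ccontr)
    assume "\<not> m \<ge> 1"
    then have "m = 0" by simp
    then obtain a where "xs = [a]" using len by (cases xs) auto
    then show False using hx ly yx by simp
  qed
  have x0: "xs ! 0 = x" using hx ne by (simp add: hd_conv_nth)
  have ym: "xs ! m = y" using ly ne len by (simp add: last_conv_nth)
  define p where "p = xs ! (m - 1)"
  interpret P: pathctx V E xs m \<rho> sdd
  proof
    show "\<forall>e\<in>E. sdd e \<ge> 0" using sdd_b wlu by force
  qed (use t xp len m1 r in auto)
  have sm: "Suc (m - 1) = m" using m1 by simp
  have "m - 1 < m" using m1 by simp
  from P.edge[OF this] have epy: "{p, y} \<in> E" unfolding p_def sm ym .
  have eyp: "{y, p} \<in> E" using epy by (simp add: insert_commute)
  define ed where "ed i = {xs ! i, xs ! Suc i}" for i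
  define PE where "PE = ed ` {..<m}"
  have PEeq: "path_edges E x y = PE"
  proof
    show "path_edges E x y \<subseteq> PE"
    proof
      fix e assume "e \<in> path_edges E x y"
      then have "\<exists>ys. is_path E ys \<and> hd ys = x \<and> last ys = y \<and> (\<exists>i < length ys - 1. e = {ys ! i, ys ! Suc i})"
        unfolding path_edges_def by simp
      then obtain ys i where ys: "is_path E ys" "hd ys = x" "last ys = y" "i < length ys - 1" "e = {ys ! i, ys ! Suc i}"
        by (elim exE conjE)
      obtain j where j: "j < length xs - 1" "{ys ! i, ys ! Suc i} = {xs ! j, xs ! Suc j}"
        using path_edge_in[OF t xp hx ly ys(1-4)] by (elim exE conjE)
      have "e = ed j" using j(2) ys(5) unfolding ed_def by simp
      moreover have "j \<in> {..<m}" using j(1) len by simp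
      ultimately show "e \<in> PE" unfolding PE_def by (rule image_eqI)
    qed
  next
    show "PE \<subseteq> path_edges E x y"
    proof
      fix e assume "e \<in> PE"
      then obtain i where i: "i < m" "e = {xs ! i, xs ! Suc i}" unfolding PE_def ed_def by auto
      have "\<exists>i' < length xs - 1. e = {xs ! i', xs ! Suc i'}" using i len by auto
      then show "e \<in> path_edges E x y" unfolding path_edges_def using xp hx ly by blast
    qed
  qed
  have PEE: "PE \<subseteq> E" unfolding PE_def ed_def using P.edge by auto
  have finPE: "finite PE" unfolding PE_def by simp
  have inj: "inj_on ed {..<m}"
  proof (rule inj_onI)
    fix i j assume i: "i \<in> {..<m}" and j: "j \<in> {..<m}" and eq: "ed i = ed j"
    have "xs ! i \<in> {xs ! j, xs ! Suc j}" using eq unfolding ed_def by blast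
    then show "i = j"
    proof
      assume "xs ! i = xs ! j" then show "i = j" using P.neq[of i j] i j by force
    next
      assume a: "xs ! i \<in> {xs ! Suc j}"
      then have ij: "i = Suc j" using P.neq[of i "Suc j"] i j by force
      have "xs ! Suc i \<in> {xs ! j, xs ! Suc j}" using eq unfolding ed_def by blast
      then show "i = j" using P.neq[of "Suc i" j] P.neq[of "Suc i" "Suc j"] i j ij by force
    qed
  qed
  define X where "X = comp E V y x"
  have prefX: "xs ! i \<in> X" if i: "i < m" for i
  proof -
    have "(xs ! 0, xs ! i) \<in> (adj E (V - {y}))\<^sup>*"
    proof (rule walk_reach[where f = "(!) xs"])
      fix k assume k: "0 \<le> k" "k < i"
      have "xs ! k \<noteq> y" "xs ! Suc k \<noteq> y" using P.neq[of k m] P.neq[of "Suc k" m] k i ym by auto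
      moreover have "xs ! k \<in> V" "xs ! Suc k \<in> V" using P.inV k i by auto
      ultimately show "(xs ! k, xs ! Suc k) \<in> adj E (V - {y})"
        using P.edge[of k] k i unfolding adj_def by auto
    qed simp
    then show ?thesis using x0 unfolding X_def comp_def by simp
  qed
  have pX: "p \<in> X" using prefX[of "m - 1"] m1 unfolding p_def by simp
  have Xp: "X = comp E V y p"
  proof -
    have "(x,p) \<in> (adj E (V - {y}))\<^sup>*" using pX unfolding X_def comp_def by simp
    then show ?thesis unfolding X_def by (rule comp_eq)
  qed
  define Y where "Y = comp E V p y"
  have XY: "X \<inter> Y = {}" using bridge[OF t epy] Xp unfolding Y_def by blast
  have XV: "X \<subseteq> V" using comp_sub[of E V y x] xV yx unfolding X_def by auto
  have TsubX: "Tsub E V y x = X" unfolding Tsub_def X_def by simp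
  have TbarX: "Tbar E V y x = V - X" unfolding Tbar_def Tsub_def X_def by simp
  have edne: "e \<noteq> {}" if "e \<in> E" for e using tree_edge[OF t that] by auto
  have s_eq: "s e = (if e \<in> PE \<union> edges_of E X then (if e \<in> PE then wu e else wl e) else sdd e)" if e: "e \<in> E" for e
  proof -
    have "e \<in> edges_of E X \<Longrightarrow> e \<notin> edges_of E (V - X)" using edne[OF e] unfolding edges_of_def by blast
    then show ?thesis unfolding s_def alpha_def PEeq TsubX TbarX by auto
  qed
  have sC: "s \<in> scenarios E wl wu" unfolding scenarios_def using s_eq wlu sdd_b by auto
  have s_nn: "\<forall>e\<in>E. s e \<ge> 0" using sC wlu unfolding scenarios_def by force
  interpret Q: pathctx V E xs m \<rho> s
    by unfold_locales (use t xp len m1 r s_nn in auto)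
  have L1: "btime \<rho> E s V x \<ge> pd \<rho> s xs 0 + Rt \<rho> E V s p y"
    using Q.x_lb x0 ym unfolding p_def by simp
  have prime: "Rt \<rho> E V sdd y p \<le> Rt \<rho> E V sdd p y"
  proof -
    have "p \<in> nbrs E V y" using eyp edge_in_V[OF t eyp] unfolding nbrs_def by auto
    then have "btime \<rho> E sdd (Tbar E V y p) y \<ge> btime \<rho> E sdd (Tbar E V p y) p"
      using pc unfolding prime_center_def by blast
    then show ?thesis unfolding Rt_def Tbar_eq[OF t eyp] Tbar_eq[OF t epy] .
  qed
  have L2: "btime \<rho> E sdd V x \<le> pd \<rho> s xs 0 - (\<Sum>i<m. wu (ed i) - sdd (ed i)) + Rt \<rho> E V sdd p y"
  proof -
    have "btime \<rho> E sdd V x \<le> pd \<rho> sdd xs 0 + Rt \<rho> E V sdd p y"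
      using P.x_ub prime x0 ym unfolding p_def by simp
    moreover have "pd \<rho> s xs 0 = pd \<rho> sdd xs 0 + (\<Sum>i<m. wu (ed i) - sdd (ed i))"
    proof -
      have "s (ed i) = wu (ed i)" if "i < m" for i
        using s_eq[of "ed i"] P.edge[OF that] that unfolding PE_def ed_def by auto
      then have "pd \<rho> s xs 0 = (\<Sum>k<m. \<rho> + sdd (ed k) + (wu (ed k) - sdd (ed k)))"
        unfolding pd_def len ed_def by (simp add: atLeast0LessThan)
      also have "\<dots> = pd \<rho> sdd xs 0 + (\<Sum>i<m. wu (ed i) - sdd (ed i))"
        unfolding pd_def len ed_def by (simp add: atLeast0LessThan sum.distrib sum_subtractf)
      finally show ?thesis .
    qed
    ultimately show ?thesis by simp
  qed
  have loc: "Rt \<rho> E V s p y = Rt \<rho> E V sdd p y"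
    unfolding Rt_def
  proof (rule locality[OF nl])
    show "finite (comp E V p y)" "y \<in> comp E V p y" using side_fin[OF t epy] by auto
    show "\<forall>e\<in>E. e \<subseteq> comp E V p y \<longrightarrow> s e = sdd e"
    proof (intro ballI impI)
      fix e assume e: "e \<in> E" and eY: "e \<subseteq> comp E V p y"
      have "e \<notin> PE"
      proof
        assume "e \<in> PE"
        then obtain i where i: "i < m" "e = {xs ! i, xs ! Suc i}" unfolding PE_def ed_def by auto
        then have "xs ! i \<in> Y" using eY unfolding Y_def by auto
        then show False using prefX[OF i(1)] XY by auto
      qed
      moreover have "e \<notin> edges_of E X"
      proof
        assume "e \<in> edges_of E X"
        then have "e \<subseteq> X" unfolding edges_of_def by simp
        then show False using eY XY edne[OF e] unfolding Y_def by blast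
      qed
      ultimately show "s e = sdd e" using s_eq[OF e] by simp
    qed
  qed
  have lip: "btime \<rho> E s V y \<le> btime \<rho> E sdd V y + (\<Sum>e\<in>{e\<in>PE. e \<subseteq> V}. wu e - sdd e)"
  proof (rule lipschitz[OF nl finPE _ _ fV yV])
    show "\<forall>e\<in>PE. wu e - sdd e \<ge> 0" using PEE sdd_b by force
    show "\<forall>e\<in>E. s e \<le> sdd e + (if e \<in> PE then wu e - sdd e else 0)"
      using s_eq sdd_b by auto
  qed
  have "{e\<in>PE. e \<subseteq> V} = PE" using PEE edge_in_V[OF t] tree_edge[OF t] by blast
  moreover have "(\<Sum>e\<in>PE. wu e - sdd e) = (\<Sum>i<m. wu (ed i) - sdd (ed i))"
    unfolding PE_def by (rule sum.reindex_cong[OF inj refl]) simp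
  ultimately have lip': "btime \<rho> E s V y \<le> btime \<rho> E sdd V y + (\<Sum>i<m. wu (ed i) - sdd (ed i))"
    using lip by simp
  have key: "regret \<rho> V E s x y \<ge> regret \<rho> V E sdd x y"
    unfolding regret_def using L1 L2 loc lip' by simp
  have bound: "regret \<rho> V E t x y2 \<le> regret \<rho> V E s x y" if "y2 \<in> V" "t \<in> scenarios E wl wu" for y2 t
  proof -
    have "regret \<rho> V E t x y2 \<le> regret \<rho> V E sdd x y'" using y'max that by blast
    also have "\<dots> \<le> regret \<rho> V E sdd x y" unfolding regret_def using ycen by simp
    also have "\<dots> \<le> regret \<rho> V E s x y" by (rule key)
    finally show ?thesis .
  qed
  have "worst_case \<rho> V E wl wu x s" unfolding worst_case_def using sC yV bound by blast
  moreover have "y \<in> bcenters \<rho> V E s"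
    unfolding bcenters_def
  proof (intro CollectI conjI ballI)
    show "y \<in> V" by (rule yV)
    fix v assume "v \<in> V"
    then have "regret \<rho> V E s x v \<le> regret \<rho> V E s x y" using bound sC by blast
    then show "btime \<rho> E s V y \<le> btime \<rho> E s V v" unfolding regret_def by simp
  qed
  ultimately show ?thesis by simp
qed


end
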